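(* Let $k\ge 0$ be an integer. Let $G_k$ be the tree with vertex set $\{r,s\}\cup\bigcup_{i=1}^k\{y^{(i)},x^{(i)},w^{(i)},v^{(i)},u^{(i)}\}$ and edge set $\{rs\}\cup\bigcup_{i=1}^k\{sy^{(i)},\,y^{(i)}x^{(i)},\,x^{(i)}w^{(i)},\,w^{(i)}v^{(i)},\,v^{(i)}u^{(i)}\}$ (so $s$ carries a pendant vertex $r$ and $k$ pendant paths on $5$ vertices). Let $H_k$ be obtained from $G_k$ by adding three new vertices $u,v,w$ and edges $uv,vw,ws$. Then $\gamma(G_k)=2k+1$ and $\Gamma(G_k)=5^k+3^k$, while $\gamma(H_k)=2k+2$ and $\Gamma(H_k)=2\cdot 5^k+3^k$.
   Context: For a graph $G$, a set $D\subseteq V(G)$ is dominating if every vertex of $G$ lies in $D$ or has a neighbour in $D$. The domination number $\gamma(G)$ is the minimum size of a dominating set; $\Gamma(G)$ denotes the number of dominating sets of $G$ of size $\gamma(G)$. *)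

theory Defs
  imports Main
begin

definition adj :: "('a \<times> 'a) set \<Rightarrow> 'a \<Rightarrow> 'a \<Rightarrow> bool" where
  "adj Es x y \<longleftrightarrow> (x, y) \<in> Es \<or> (y, x) \<in> Es"

definition dominating :: "'a set \<Rightarrow> ('a \<times> 'a) set \<Rightarrow> 'a set \<Rightarrow> bool" where
  "dominating V Es D \<longleftrightarrow> D \<subseteq> V \<and> (\<forall>x\<in>V. x \<in> D \<or> (\<exists>y\<in>D. adj Es x y))"

definition domination_number :: "'a set \<Rightarrow> ('a \<times> 'a) set \<Rightarrow> nat" where
  "domination_number V Es = (LEAST n. \<exists>D. dominating V Es D \<and> card D = n)"

definition num_min_dom_sets :: "'a set \<Rightarrow> ('a \<times> 'a) set \<Rightarrow> nat" where
  "num_min_dom_sets V Es =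
     card {D. dominating V Es D \<and> card D = domination_number V Es}"

datatype vtx = R | S | Y nat | X nat | W nat | V nat | U nat | Uh | Vh | Wh

definition G_verts :: "nat \<Rightarrow> vtx set" where
  "G_verts k = {R, S} \<union> (\<Union>i\<in>{1..k}. {Y i, X i, W i, V i, U i})"

definition G_edges :: "nat \<Rightarrow> (vtx \<times> vtx) set" where
  "G_edges k = {(R, S)} \<union>
     (\<Union>i\<in>{1..k}. {(S, Y i), (Y i, X i), (X i, W i), (W i, V i), (V i, U i)})"

definition H_verts :: "nat \<Rightarrow> vtx set" where
  "H_verts k = G_verts k \<union> {Uh, Vh, Wh}"

definition H_edges :: "nat \<Rightarrow> (vtx \<times> vtx) set" where
  "H_edges k = G_edges k \<union> {(Uh, Vh), (Vh, Wh), (Wh, S)}"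

end

theory Submission
  imports Defs "HOL-Library.FuncSet"
begin

definition B :: "nat \<Rightarrow> vtx set" where "B i = {Y i, X i, W i, V i, U i}"
definition Cu :: "vtx set" where "Cu = {R, S, Uh, Vh, Wh}"
definition O5 :: "nat \<Rightarrow> vtx set set" where
  "O5 i = {{V i, X i}, {V i, W i}, {V i, Y i}, {U i, W i}, {U i, X i}}"
definition O3 :: "nat \<Rightarrow> vtx set set" where
  "O3 i = {{V i, X i}, {U i, X i}, {V i, Y i}}"
definition okb :: "bool \<Rightarrow> nat \<Rightarrow> vtx set \<Rightarrow> bool" where
  "okb s i D = ((U i \<in> D \<or> V i \<in> D) \<and> (V i \<in> D \<or> W i \<in> D \<or> U i \<in> D)
     \<and> (W i \<in> D \<or> X i \<in> D \<or> V i \<in> D) \<and> (X i \<in> D \<or> Y i \<in> D \<or> W i \<in> D)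
     \<and> (Y i \<in> D \<or> X i \<in> D \<or> s))"
definition img :: "vtx set \<Rightarrow> nat set \<Rightarrow> (nat \<Rightarrow> vtx set set) \<Rightarrow> vtx set set" where
  "img c I Q = (\<lambda>f. c \<union> (\<Union>i\<in>I. f i)) ` PiE I Q"

lemma B_disj: "i \<noteq> j \<Longrightarrow> B i \<inter> B j = {}" by (auto simp: B_def)
lemma Cu_B: "Cu \<inter> B i = {}" by (auto simp: Cu_def B_def)
lemma fin_B[simp]: "finite (B i)" by (simp add: B_def)
lemma fin_Cu[simp]: "finite Cu" by (simp add: Cu_def)

lemma card_decomp:
  assumes "finite I" "D \<subseteq> Cu \<union> (\<Union>i\<in>I. B i)"
  shows "card D = card (D \<inter> Cu) + (\<Sum>i\<in>I. card (D \<inter> B i))"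
proof -
  have eq: "D = (D \<inter> Cu) \<union> (\<Union>i\<in>I. D \<inter> B i)" using assms by blast
  have d: "(D \<inter> Cu) \<inter> (\<Union>i\<in>I. D \<inter> B i) = {}" using Cu_B by blast
  have "card D = card (D \<inter> Cu) + card (\<Union>i\<in>I. D \<inter> B i)"
    by (subst eq, rule card_Un_disjoint) (use d assms in auto)
  also have "card (\<Union>i\<in>I. D \<inter> B i) = (\<Sum>i\<in>I. card (D \<inter> B i))"
    by (rule card_UN_disjoint) (use assms B_disj in auto)
  finally show ?thesis .
qed

lemma okb_Int: "okb s i (D \<inter> B i) = okb s i D" by (simp add: okb_def B_def)

lemma okb_ge2: assumes "okb s i D" shows "2 \<le> card (D \<inter> B i)"
proof -
  obtain a where a: "a \<in> {U i, V i}" "a \<in> D" using assms by (auto simp: okb_def)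
  obtain b where b: "b \<in> {X i, Y i, W i}" "b \<in> D" using assms by (auto simp: okb_def)
  have "a \<noteq> b" using a b by auto
  hence "card {a, b} = 2" by simp
  moreover have "{a, b} \<subseteq> D \<inter> B i" using a b by (auto simp: B_def)
  ultimately show ?thesis by (metis card_mono fin_B finite_Int)
qed

lemma okb_eq2: assumes "okb s i D" "card (D \<inter> B i) = 2"
  shows "D \<inter> B i \<in> (if s then O5 i else O3 i)"
proof -
  obtain a b where ab: "D \<inter> B i = {a, b}" "a \<noteq> b" using assms(2) card_2_iff by metis
  have ok: "okb s i {a, b}" using assms(1) okb_Int ab by metis
  have "a \<in> B i" "b \<in> B i" using ab by auto
  then show ?thesis using ok ab(2) unfolding ab
    by (auto simp: B_def okb_def O5_def O3_def doubleton_eq_iff)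
qed

lemma O5_props: "P \<in> O5 i \<Longrightarrow> P \<subseteq> B i \<and> card P = 2 \<and> okb True i P"
  by (auto simp: O5_def B_def okb_def)
lemma O3_props: "P \<in> O3 i \<Longrightarrow> P \<subseteq> B i \<and> card P = 2 \<and> okb s i P"
  by (auto simp: O3_def B_def okb_def)
lemma card_O5[simp]: "card (O5 i) = 5" by (simp add: O5_def doubleton_eq_iff)
lemma card_O3[simp]: "card (O3 i) = 3" by (simp add: O3_def doubleton_eq_iff)

lemma part_B:
  assumes "f \<in> PiE I Q" "\<forall>i\<in>I. \<forall>P\<in>Q i. P \<subseteq> B i" "c \<subseteq> Cu" "i \<in> I"
  shows "(c \<union> (\<Union>j\<in>I. f j)) \<inter> B i = f i"
proof -
  have fi: "\<forall>j\<in>I. f j \<subseteq> B j" using assms(1,2) by (auto simp: PiE_def)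
  have "c \<inter> B i = {}" using assms(3) Cu_B by blast
  moreover have "\<forall>j\<in>I. j \<noteq> i \<longrightarrow> f j \<inter> B i = {}" using fi B_disj by blast
  moreover have "f i \<subseteq> B i" using fi assms(4) by blast
  ultimately show ?thesis using assms(4) by fastforce
qed

lemma part_C:
  assumes "f \<in> PiE I Q" "\<forall>i\<in>I. \<forall>P\<in>Q i. P \<subseteq> B i" "c \<subseteq> Cu"
  shows "(c \<union> (\<Union>j\<in>I. f j)) \<inter> Cu = c"
proof -
  have fi: "\<forall>j\<in>I. f j \<subseteq> B j" using assms(1,2) by (auto simp: PiE_def)
  then have "\<forall>j\<in>I. f j \<inter> Cu = {}" using Cu_B by blast
  then show ?thesis using assms(3) by blast
qed

lemma img_props:
  assumes "D \<in> img c I Q" "c \<subseteq> Cu" "finite I" "\<forall>i\<in>I. \<forall>P\<in>Q i. P \<subseteq> B i \<and> card P = 2"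
  shows "D \<subseteq> c \<union> (\<Union>i\<in>I. B i)" "D \<inter> Cu = c" "\<forall>i\<in>I. D \<inter> B i \<in> Q i"
    "card D = card c + 2 * card I"
proof -
  obtain f where f: "f \<in> PiE I Q" "D = c \<union> (\<Union>j\<in>I. f j)" using assms(1) by (auto simp: img_def)
  have q: "\<forall>i\<in>I. \<forall>P\<in>Q i. P \<subseteq> B i" using assms(4) by blast
  have fi: "\<forall>j\<in>I. f j \<in> Q j" using f(1) by auto
  show s: "D \<subseteq> c \<union> (\<Union>i\<in>I. B i)" using f fi q by blast
  show c: "D \<inter> Cu = c" using part_C[OF f(1) q assms(2)] f(2) by simp
  show b: "\<forall>i\<in>I. D \<inter> B i \<in> Q i" using part_B[OF f(1) q assms(2)] f(2) fi by simp
  have "card D = card (D \<inter> Cu) + (\<Sum>i\<in>I. card (D \<inter> B i))"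
    by (rule card_decomp) (use s assms(2,3) in auto)
  also have "(\<Sum>i\<in>I. card (D \<inter> B i)) = (\<Sum>i\<in>I. 2)"
    by (rule sum.cong) (use b assms(4) in auto)
  finally show "card D = card c + 2 * card I" using c by simp
qed

lemma img_card:
  assumes "finite I" "\<forall>i\<in>I. \<forall>P\<in>Q i. P \<subseteq> B i" "c \<subseteq> Cu"
  shows "card (img c I Q) = (\<Prod>i\<in>I. card (Q i))"
proof -
  have "inj_on (\<lambda>f. c \<union> (\<Union>i\<in>I. f i)) (PiE I Q)"
  proof (rule inj_onI)
    fix f g assume fg: "f \<in> PiE I Q" "g \<in> PiE I Q"
      "c \<union> (\<Union>i\<in>I. f i) = c \<union> (\<Union>i\<in>I. g i)"
    show "f = g"
    proof (rule PiE_ext[OF fg(1,2)])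
      fix i assume "i \<in> I"
      then show "f i = g i" using part_B[OF fg(1) assms(2,3)] part_B[OF fg(2) assms(2,3)] fg(3)
        by metis
    qed
  qed
  then show ?thesis unfolding img_def using card_image card_PiE assms(1) by metis
qed

lemma to_img:
  assumes "D \<subseteq> Cu \<union> (\<Union>i\<in>I. B i)" "D \<inter> Cu = c" "\<forall>i\<in>I. D \<inter> B i \<in> Q i"
  shows "D \<in> img c I Q"
proof -
  let ?f = "restrict (\<lambda>i. D \<inter> B i) I"
  have "?f \<in> PiE I Q" using assms(3) by auto
  moreover have "D = c \<union> (\<Union>i\<in>I. ?f i)" using assms(1,2) by auto
  ultimately show ?thesis unfolding img_def by blast
qed

lemma sum_all2:
  fixes g :: "nat \<Rightarrow> nat"
  assumes "finite I" "\<forall>i\<in>I. 2 \<le> g i" "(\<Sum>i\<in>I. g i) \<le> 2 * card I"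
  shows "\<forall>i\<in>I. g i = 2"
proof (rule ccontr)
  assume "\<not> ?thesis"
  then have "\<exists>a\<in>I. 2 < g a" using assms(2) by force
  then have "(\<Sum>i\<in>I. 2) < (\<Sum>i\<in>I. g i)"
    using sum_strict_mono_ex1[OF assms(1), of "\<lambda>_. 2" g] assms(2) by auto
  then show False using assms(3) by simp
qed

lemma least_eq:
  assumes "P D0" "card D0 = m" "\<And>D. P D \<Longrightarrow> m \<le> card D"
  shows "(LEAST n. \<exists>D. P D \<and> card D = n) = m"
  by (rule Least_equality) (use assms in auto)

lemma adjG:
  "adj (G_edges k) R y \<longleftrightarrow> y = S"
  "adj (G_edges k) S y \<longleftrightarrow> y = R \<or> (\<exists>j\<in>{1..k}. y = Y j)"
  "adj (G_edges k) (Y i) y \<longleftrightarrow> i \<in> {1..k} \<and> (y = S \<or> y = X i)"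
  "adj (G_edges k) (X i) y \<longleftrightarrow> i \<in> {1..k} \<and> (y = Y i \<or> y = W i)"
  "adj (G_edges k) (W i) y \<longleftrightarrow> i \<in> {1..k} \<and> (y = X i \<or> y = V i)"
  "adj (G_edges k) (V i) y \<longleftrightarrow> i \<in> {1..k} \<and> (y = W i \<or> y = U i)"
  "adj (G_edges k) (U i) y \<longleftrightarrow> i \<in> {1..k} \<and> y = V i"
  "adj (G_edges k) Uh y \<longleftrightarrow> False"
  "adj (G_edges k) Vh y \<longleftrightarrow> False"
  "adj (G_edges k) Wh y \<longleftrightarrow> False"
  by (auto simp: adj_def G_edges_def)

lemma adj_Un: "adj (A \<union> A') x y \<longleftrightarrow> adj A x y \<or> adj A' x y" by (auto simp: adj_def)

lemma adjH:
  "adj (H_edges k) R y \<longleftrightarrow> y = S"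
  "adj (H_edges k) S y \<longleftrightarrow> y = R \<or> y = Wh \<or> (\<exists>j\<in>{1..k}. y = Y j)"
  "adj (H_edges k) (Y i) y \<longleftrightarrow> i \<in> {1..k} \<and> (y = S \<or> y = X i)"
  "adj (H_edges k) (X i) y \<longleftrightarrow> i \<in> {1..k} \<and> (y = Y i \<or> y = W i)"
  "adj (H_edges k) (W i) y \<longleftrightarrow> i \<in> {1..k} \<and> (y = X i \<or> y = V i)"
  "adj (H_edges k) (V i) y \<longleftrightarrow> i \<in> {1..k} \<and> (y = W i \<or> y = U i)"
  "adj (H_edges k) (U i) y \<longleftrightarrow> i \<in> {1..k} \<and> y = V i"
  "adj (H_edges k) Uh y \<longleftrightarrow> y = Vh"
  "adj (H_edges k) Vh y \<longleftrightarrow> y = Uh \<or> y = Wh"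
  "adj (H_edges k) Wh y \<longleftrightarrow> y = Vh \<or> y = S"
  unfolding H_edges_def adj_Un adjG by (auto simp: adj_def)

lemma G_verts_eq: "G_verts k = {R, S} \<union> (\<Union>i\<in>{1..k}. B i)"
  by (simp add: G_verts_def B_def)
lemma H_verts_eq: "H_verts k = {R, S, Uh, Vh, Wh} \<union> (\<Union>i\<in>{1..k}. B i)"
  by (auto simp: H_verts_def G_verts_def B_def)

lemma domG: "dominating (G_verts k) (G_edges k) D \<longleftrightarrow>
   D \<subseteq> G_verts k \<and> (R \<in> D \<or> S \<in> D) \<and> (\<forall>i\<in>{1..k}. okb (S \<in> D) i D)"
proof
  assume d: "dominating (G_verts k) (G_edges k) D"
  have all: "\<And>x. x \<in> G_verts k \<Longrightarrow> x \<in> D \<or> (\<exists>y\<in>D. adj (G_edges k) x y)"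
    using d by (auto simp: dominating_def)
  have "R \<in> D \<or> S \<in> D" using all[of R] by (auto simp: G_verts_def adjG)
  moreover have "okb (S \<in> D) i D" if i: "i \<in> {1..k}" for i
  proof -
    have m: "U i \<in> G_verts k" "V i \<in> G_verts k" "W i \<in> G_verts k" "X i \<in> G_verts k" "Y i \<in> G_verts k"
      using i by (auto simp: G_verts_def)
    show ?thesis unfolding okb_def
      using all[OF m(1)] all[OF m(2)] all[OF m(3)] all[OF m(4)] all[OF m(5)] i
      by (simp add: adjG) blast
  qed
  ultimately show "D \<subseteq> G_verts k \<and> (R \<in> D \<or> S \<in> D) \<and> (\<forall>i\<in>{1..k}. okb (S \<in> D) i D)"
    using d by (auto simp: dominating_def)
next
  assume a: "D \<subseteq> G_verts k \<and> (R \<in> D \<or> S \<in> D) \<and> (\<forall>i\<in>{1..k}. okb (S \<in> D) i D)"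
  have "x \<in> D \<or> (\<exists>y\<in>D. adj (G_edges k) x y)" if x: "x \<in> G_verts k" for x
  proof -
    consider "x = R" | "x = S" | i where "i \<in> {1..k}" "x \<in> {Y i, X i, W i, V i, U i}"
      using x by (auto simp: G_verts_def)
    then show ?thesis
    proof cases
      case (3 i)
      then have "okb (S \<in> D) i D" using a by blast
      with 3 show ?thesis by (auto simp: okb_def adjG)
    qed (use a in \<open>auto simp: adjG\<close>)
  qed
  then show "dominating (G_verts k) (G_edges k) D" using a by (auto simp: dominating_def)
qed

lemma domH: "dominating (H_verts k) (H_edges k) D \<longleftrightarrow>
   D \<subseteq> H_verts k \<and> (R \<in> D \<or> S \<in> D) \<and> (Uh \<in> D \<or> Vh \<in> D) \<and> (Wh \<in> D \<or> Vh \<in> D \<or> S \<in> D)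
    \<and> (\<forall>i\<in>{1..k}. okb (S \<in> D) i D)"
proof
  assume d: "dominating (H_verts k) (H_edges k) D"
  have all: "\<And>x. x \<in> H_verts k \<Longrightarrow> x \<in> D \<or> (\<exists>y\<in>D. adj (H_edges k) x y)"
    using d by (auto simp: dominating_def)
  have "R \<in> D \<or> S \<in> D" using all[of R] by (auto simp: H_verts_def G_verts_def adjH)
  moreover have "okb (S \<in> D) i D" if i: "i \<in> {1..k}" for i
  proof -
    have m: "U i \<in> H_verts k" "V i \<in> H_verts k" "W i \<in> H_verts k" "X i \<in> H_verts k" "Y i \<in> H_verts k"
      using i by (auto simp: H_verts_def G_verts_def)
    show ?thesis unfolding okb_def
      using all[OF m(1)] all[OF m(2)] all[OF m(3)] all[OF m(4)] all[OF m(5)] i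
      by (simp add: adjH) blast
  qed
  moreover have "Uh \<in> D \<or> Vh \<in> D" using all[of Uh] by (auto simp: H_verts_def adjH)
  moreover have "Wh \<in> D \<or> Vh \<in> D \<or> S \<in> D" using all[of Wh] by (auto simp: H_verts_def adjH)
  ultimately show "D \<subseteq> H_verts k \<and> (R \<in> D \<or> S \<in> D) \<and> (Uh \<in> D \<or> Vh \<in> D) \<and> (Wh \<in> D \<or> Vh \<in> D \<or> S \<in> D)
    \<and> (\<forall>i\<in>{1..k}. okb (S \<in> D) i D)"
    using d by (auto simp: dominating_def)
next
  assume a: "D \<subseteq> H_verts k \<and> (R \<in> D \<or> S \<in> D) \<and> (Uh \<in> D \<or> Vh \<in> D) \<and> (Wh \<in> D \<or> Vh \<in> D \<or> S \<in> D)
    \<and> (\<forall>i\<in>{1..k}. okb (S \<in> D) i D)"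
  have "x \<in> D \<or> (\<exists>y\<in>D. adj (H_edges k) x y)" if x: "x \<in> H_verts k" for x
  proof -
    consider "x = R" | "x = S" | "x = Uh" | "x = Vh" | "x = Wh" | i where "i \<in> {1..k}" "x \<in> {Y i, X i, W i, V i, U i}"
      using x by (auto simp: H_verts_def G_verts_def)
    then show ?thesis
    proof cases
      case (6 i)
      then have "okb (S \<in> D) i D" using a by blast
      with 6 show ?thesis by (auto simp: okb_def adjH)
    qed (use a in \<open>auto simp: adjH\<close>)
  qed
  then show "dominating (H_verts k) (H_edges k) D" using a by (auto simp: dominating_def)
qed

lemma sum_ge2:
  assumes "\<forall>i\<in>{1..k}. \<exists>s. okb s i D"
  shows "2 * k \<le> (\<Sum>i\<in>{1..k::nat}. card (D \<inter> B i))"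
proof -
  have "(\<Sum>i\<in>{1..k}. (2::nat)) \<le> (\<Sum>i\<in>{1..k}. card (D \<inter> B i))"
    by (rule sum_mono) (use assms okb_ge2 in blast)
  then show ?thesis by simp
qed

lemma O5_ok: "\<forall>i\<in>I. \<forall>P\<in>O5 i. P \<subseteq> B i \<and> card P = 2" using O5_props by blast
lemma O3_ok: "\<forall>i\<in>I. \<forall>P\<in>O3 i. P \<subseteq> B i \<and> card P = 2" using O3_props by blast

lemma okb_mono: "okb False i D \<Longrightarrow> okb s i D" by (auto simp: okb_def)

lemma G_sub: "D \<subseteq> G_verts k \<Longrightarrow> D \<subseteq> Cu \<union> (\<Union>i\<in>{1..k}. B i)"
  by (auto simp: G_verts_eq Cu_def)
lemma H_sub: "D \<subseteq> H_verts k \<Longrightarrow> D \<subseteq> Cu \<union> (\<Union>i\<in>{1..k}. B i)"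
  by (auto simp: H_verts_eq Cu_def)

lemma G_lower:
  assumes "dominating (G_verts k) (G_edges k) D"
  shows "2 * k + 1 \<le> card D"
proof -
  have a: "D \<subseteq> G_verts k" "R \<in> D \<or> S \<in> D" "\<forall>i\<in>{1..k}. okb (S \<in> D) i D"
    using assms domG by blast+
  have c: "card D = card (D \<inter> Cu) + (\<Sum>i\<in>{1..k}. card (D \<inter> B i))"
    by (rule card_decomp) (use G_sub a in auto)
  have "D \<inter> Cu \<noteq> {}" using a(2) by (auto simp: Cu_def)
  then have "1 \<le> card (D \<inter> Cu)" by (simp add: Suc_leI card_gt_0_iff)
  moreover have "2 * k \<le> (\<Sum>i\<in>{1..k}. card (D \<inter> B i))" by (rule sum_ge2) (use a in blast)
  ultimately show ?thesis using c by linarith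
qed

lemma famG:
  "{D. dominating (G_verts k) (G_edges k) D \<and> card D = 2 * k + 1}
     = img {S} {1..k} O5 \<union> img {R} {1..k} O3"
proof (intro equalityI subsetI)
  fix D assume "D \<in> {D. dominating (G_verts k) (G_edges k) D \<and> card D = 2 * k + 1}"
  then have d: "dominating (G_verts k) (G_edges k) D" and cd: "card D = 2 * k + 1" by auto
  have a: "D \<subseteq> G_verts k" "R \<in> D \<or> S \<in> D" "\<forall>i\<in>{1..k}. okb (S \<in> D) i D"
    using d domG by blast+
  have sub: "D \<subseteq> Cu \<union> (\<Union>i\<in>{1..k}. B i)" using G_sub a by blast
  have c: "card D = card (D \<inter> Cu) + (\<Sum>i\<in>{1..k}. card (D \<inter> B i))"
    by (rule card_decomp) (use sub in auto)
  have cu: "D \<inter> Cu \<subseteq> {R, S}" using a(1) by (auto simp: G_verts_eq Cu_def B_def)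
  have "D \<inter> Cu \<noteq> {}" using a(2) by (auto simp: Cu_def)
  then have c1: "1 \<le> card (D \<inter> Cu)" by (simp add: Suc_leI card_gt_0_iff)
  have s2: "2 * k \<le> (\<Sum>i\<in>{1..k}. card (D \<inter> B i))" by (rule sum_ge2) (use a in blast)
  have c1': "card (D \<inter> Cu) = 1" and "(\<Sum>i\<in>{1..k}. card (D \<inter> B i)) \<le> 2 * card {1..k}"
    using c c1 s2 cd by auto
  then have each: "\<forall>i\<in>{1..k}. card (D \<inter> B i) = 2"
    using sum_all2[of "{1..k}" "\<lambda>i. card (D \<inter> B i)"] a(3) okb_ge2 by blast
  show "D \<in> img {S} {1..k} O5 \<union> img {R} {1..k} O3"
  proof (cases "S \<in> D")
    case True
    then have "D \<inter> Cu = {S}" using c1' cu by (auto simp: Cu_def card_1_singleton_iff)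
    moreover have "\<forall>i\<in>{1..k}. D \<inter> B i \<in> O5 i" using okb_eq2 a(3) each True by fastforce
    ultimately show ?thesis using to_img[OF sub] by blast
  next
    case False
    then have "D \<inter> Cu = {R}" using a(2) cu by (auto simp: Cu_def)
    moreover have "\<forall>i\<in>{1..k}. D \<inter> B i \<in> O3 i" using okb_eq2 a(3) each False by fastforce
    ultimately show ?thesis using to_img[OF sub] by blast
  qed
next
  fix D assume D: "D \<in> img {S} {1..k} O5 \<union> img {R} {1..k} O3"
  have fin: "finite {1..k}" by simp
  have cS: "{S} \<subseteq> Cu" and cR: "{R} \<subseteq> Cu" by (auto simp: Cu_def)
  show "D \<in> {D. dominating (G_verts k) (G_edges k) D \<and> card D = 2 * k + 1}"
  proof (cases "D \<in> img {S} {1..k} O5")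
    case True
    note p = img_props[OF True cS fin O5_ok]
    have "D \<subseteq> G_verts k" using p(1) by (auto simp: G_verts_eq)
    moreover have SD: "S \<in> D" using p(2) by (auto simp: Cu_def)
    moreover have "\<forall>i\<in>{1..k}. okb (S \<in> D) i D"
    proof
      fix i assume i: "i \<in> {1..k}"
      then have "D \<inter> B i \<in> O5 i" using p(3) by blast
      then have "okb True i (D \<inter> B i)" using O5_props by blast
      then show "okb (S \<in> D) i D" using okb_Int SD by simp
    qed
    moreover have "card D = 2 * k + 1" using p(4) by simp
    ultimately show ?thesis by (simp add: domG)
  next
    case False
    then have T: "D \<in> img {R} {1..k} O3" using D by blast
    note p = img_props[OF T cR fin O3_ok]
    have "D \<subseteq> G_verts k" using p(1) by (auto simp: G_verts_eq)
    moreover have "R \<in> D" using p(2) by (auto simp: Cu_def)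
    moreover have "\<forall>i\<in>{1..k}. okb (S \<in> D) i D"
    proof
      fix i assume i: "i \<in> {1..k}"
      then have "D \<inter> B i \<in> O3 i" using p(3) by blast
      then have "okb (S \<in> D) i (D \<inter> B i)" using O3_props by blast
      then show "okb (S \<in> D) i D" using okb_Int by simp
    qed
    moreover have "card D = 2 * k + 1" using p(4) by simp
    ultimately show ?thesis by (simp add: domG)
  qed
qed

lemma H_core:
  assumes "D \<subseteq> H_verts k" "R \<in> D \<or> S \<in> D" "Uh \<in> D \<or> Vh \<in> D"
  shows "2 \<le> card (D \<inter> Cu)"
proof -
  obtain a where a: "a \<in> {R, S}" "a \<in> D" using assms by auto
  obtain b where b: "b \<in> {Uh, Vh}" "b \<in> D" using assms by auto
  have "a \<noteq> b" using a b by auto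
  hence "card {a, b} = 2" by simp
  moreover have "{a, b} \<subseteq> D \<inter> Cu" using a b by (auto simp: Cu_def)
  ultimately show ?thesis by (metis card_mono fin_Cu finite_Int)
qed

lemma H_core2:
  assumes "R \<in> D \<or> S \<in> D" "Uh \<in> D \<or> Vh \<in> D" "Wh \<in> D \<or> Vh \<in> D \<or> S \<in> D"
    "card (D \<inter> Cu) = 2"
  shows "D \<inter> Cu = {S, Uh} \<or> D \<inter> Cu = {S, Vh} \<or> D \<inter> Cu = {R, Vh}"
proof -
  obtain a where a: "a \<in> {R, S}" "a \<in> D" using assms by auto
  obtain b where b: "b \<in> {Uh, Vh}" "b \<in> D" using assms by auto
  have "a \<noteq> b" using a b by auto
  hence "card {a, b} = 2" by simp
  moreover have sub: "{a, b} \<subseteq> D \<inter> Cu" using a b by (auto simp: Cu_def)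
  ultimately have eq: "D \<inter> Cu = {a, b}" using assms(4)
    by (metis card_subset_eq fin_Cu finite_Int)
  have "Wh \<in> D \<longleftrightarrow> Wh \<in> D \<inter> Cu" "S \<in> D \<longleftrightarrow> S \<in> D \<inter> Cu" "Vh \<in> D \<longleftrightarrow> Vh \<in> D \<inter> Cu"
    by (auto simp: Cu_def)
  then have "Wh \<in> {a,b} \<or> Vh \<in> {a,b} \<or> S \<in> {a,b}" using assms(3) eq by simp
  then show ?thesis using a(1) b(1) eq by auto
qed

lemma H_lower:
  assumes "dominating (H_verts k) (H_edges k) D"
  shows "2 * k + 2 \<le> card D"
proof -
  have a: "D \<subseteq> H_verts k" "R \<in> D \<or> S \<in> D" "Uh \<in> D \<or> Vh \<in> D" "\<forall>i\<in>{1..k}. okb (S \<in> D) i D"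
    using assms domH by blast+
  have c: "card D = card (D \<inter> Cu) + (\<Sum>i\<in>{1..k}. card (D \<inter> B i))"
    by (rule card_decomp) (use H_sub a in auto)
  have "2 \<le> card (D \<inter> Cu)" using H_core a by blast
  moreover have "2 * k \<le> (\<Sum>i\<in>{1..k}. card (D \<inter> B i))" by (rule sum_ge2) (use a in blast)
  ultimately show ?thesis using c by linarith
qed

lemma img_H:
  assumes "D \<in> img c {1..k} Q" "c \<subseteq> {R, S, Uh, Vh, Wh}" "c \<noteq> {}"
    "\<forall>i\<in>{1..k}. \<forall>P\<in>Q i. P \<subseteq> B i \<and> card P = 2 \<and> okb (S \<in> c) i P"
  shows "D \<subseteq> H_verts k" "card D = card c + 2 * k" "D \<inter> Cu = c"
    "\<forall>i\<in>{1..k}. okb (S \<in> D) i D"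
proof -
  have q: "\<forall>i\<in>{1..k}. \<forall>P\<in>Q i. P \<subseteq> B i \<and> card P = 2" using assms(4) by blast
  have cc: "c \<subseteq> Cu" using assms(2) by (simp add: Cu_def)
  note p = img_props[OF assms(1) cc finite_atLeastAtMost q]
  show "D \<subseteq> H_verts k" using p(1) assms(2) by (auto simp: H_verts_eq)
  show "card D = card c + 2 * k" using p(4) by simp
  show dc: "D \<inter> Cu = c" using p(2) by simp
  have "S \<in> D \<longleftrightarrow> S \<in> c" using dc by (auto simp: Cu_def)
  then show "\<forall>i\<in>{1..k}. okb (S \<in> D) i D"
  proof (intro ballI)
    fix i assume i: "i \<in> {1..k}"
    assume SS: "S \<in> D \<longleftrightarrow> S \<in> c"
    have "D \<inter> B i \<in> Q i" using p(3) i by blast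
    then have "okb (S \<in> c) i (D \<inter> B i)" using assms(4) i by blast
    then show "okb (S \<in> D) i D" using okb_Int SS by simp
  qed
qed

lemma O5_ok': "\<forall>i\<in>I. \<forall>P\<in>O5 i. P \<subseteq> B i \<and> card P = 2 \<and> okb True i P" using O5_props by blast
lemma O3_ok': "\<forall>i\<in>I. \<forall>P\<in>O3 i. P \<subseteq> B i \<and> card P = 2 \<and> okb s i P" using O3_props by blast

lemma famH:
  "{D. dominating (H_verts k) (H_edges k) D \<and> card D = 2 * k + 2}
     = img {S, Uh} {1..k} O5 \<union> img {S, Vh} {1..k} O5 \<union> img {R, Vh} {1..k} O3"
proof (intro equalityI subsetI)
  fix D assume "D \<in> {D. dominating (H_verts k) (H_edges k) D \<and> card D = 2 * k + 2}"
  then have d: "dominating (H_verts k) (H_edges k) D" and cd: "card D = 2 * k + 2" by auto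
  have a: "D \<subseteq> H_verts k" "R \<in> D \<or> S \<in> D" "Uh \<in> D \<or> Vh \<in> D" "Wh \<in> D \<or> Vh \<in> D \<or> S \<in> D"
    "\<forall>i\<in>{1..k}. okb (S \<in> D) i D"
    using d[unfolded domH] by blast+
  have sub: "D \<subseteq> Cu \<union> (\<Union>i\<in>{1..k}. B i)" using H_sub a by blast
  have c: "card D = card (D \<inter> Cu) + (\<Sum>i\<in>{1..k}. card (D \<inter> B i))"
    by (rule card_decomp) (use sub in auto)
  have c1: "2 \<le> card (D \<inter> Cu)" using H_core a by blast
  have s2: "2 * k \<le> (\<Sum>i\<in>{1..k}. card (D \<inter> B i))" by (rule sum_ge2) (use a in blast)
  have c1': "card (D \<inter> Cu) = 2" and "(\<Sum>i\<in>{1..k}. card (D \<inter> B i)) \<le> 2 * card {1..k}"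
    using c c1 s2 cd by auto
  then have each: "\<forall>i\<in>{1..k}. card (D \<inter> B i) = 2"
    using sum_all2[of "{1..k}" "\<lambda>i. card (D \<inter> B i)"] a(5) okb_ge2 by blast
  have core: "D \<inter> Cu = {S, Uh} \<or> D \<inter> Cu = {S, Vh} \<or> D \<inter> Cu = {R, Vh}"
    using H_core2 a(2,3,4) c1' by blast
  have SD: "S \<in> D \<longleftrightarrow> S \<in> D \<inter> Cu" by (auto simp: Cu_def)
  show "D \<in> img {S, Uh} {1..k} O5 \<union> img {S, Vh} {1..k} O5 \<union> img {R, Vh} {1..k} O3"
  proof (cases "S \<in> D")
    case True
    have "\<forall>i\<in>{1..k}. D \<inter> B i \<in> O5 i" using okb_eq2 a(5) each True by fastforce
    moreover have "D \<inter> Cu = {S, Uh} \<or> D \<inter> Cu = {S, Vh}" 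
    proof -
      have s1: "S \<in> D \<inter> Cu" using True by (simp add: Cu_def)
      have "D \<inter> Cu \<noteq> {R, Vh}"
      proof
        assume "D \<inter> Cu = {R, Vh}" with s1 show False by simp
      qed
      then show ?thesis using core by blast
    qed
    ultimately show ?thesis using to_img[OF sub] by blast
  next
    case False
    have "\<forall>i\<in>{1..k}. D \<inter> B i \<in> O3 i" using okb_eq2 a(5) each False by fastforce
    moreover have "D \<inter> Cu = {R, Vh}"
    proof -
      have s1: "S \<notin> D \<inter> Cu" using False by simp
      have "D \<inter> Cu \<noteq> {S, Uh}" "D \<inter> Cu \<noteq> {S, Vh}"
        using s1 by (metis insertI1)+
      then show ?thesis using core by blast
    qed
    ultimately show ?thesis using to_img[OF sub] by blast
  qed
next
  fix D assume D: "D \<in> img {S, Uh} {1..k} O5 \<union> img {S, Vh} {1..k} O5 \<union> img {R, Vh} {1..k} O3"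
  have "D \<subseteq> H_verts k \<and> card D = 2 + 2 * k \<and> (\<forall>i\<in>{1..k}. okb (S \<in> D) i D) \<and>
     (D \<inter> Cu = {S, Uh} \<or> D \<inter> Cu = {S, Vh} \<or> D \<inter> Cu = {R, Vh})"
  proof -
    consider "D \<in> img {S, Uh} {1..k} O5" | "D \<in> img {S, Vh} {1..k} O5" | "D \<in> img {R, Vh} {1..k} O3"
      using D by blast
    then show ?thesis
    proof cases
      case 1 have c: "{S, Uh} \<subseteq> {R, S, Uh, Vh, Wh}" "{S, Uh} \<noteq> {}" by auto
      have q: "\<forall>i\<in>{1..k}. \<forall>P\<in>O5 i. P \<subseteq> B i \<and> card P = 2 \<and> okb (S \<in> {S, Uh}) i P"
        using O5_ok' by simp
      show ?thesis using img_H[OF 1 c q] by simp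
    next
      case 2 have c: "{S, Vh} \<subseteq> {R, S, Uh, Vh, Wh}" "{S, Vh} \<noteq> {}" by auto
      have q: "\<forall>i\<in>{1..k}. \<forall>P\<in>O5 i. P \<subseteq> B i \<and> card P = 2 \<and> okb (S \<in> {S, Vh}) i P"
        using O5_ok' by simp
      show ?thesis using img_H[OF 2 c q] by simp
    next
      case 3 have c: "{R, Vh} \<subseteq> {R, S, Uh, Vh, Wh}" "{R, Vh} \<noteq> {}" by auto
      show ?thesis using img_H[OF 3 c O3_ok'] by simp
    qed
  qed
  then have A: "D \<subseteq> H_verts k" "card D = 2 * k + 2" "\<forall>i\<in>{1..k}. okb (S \<in> D) i D"
    and core: "D \<inter> Cu = {S, Uh} \<or> D \<inter> Cu = {S, Vh} \<or> D \<inter> Cu = {R, Vh}" by simp_all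
  have m: "x \<in> D" if "x \<in> D \<inter> Cu" for x using that by blast
  have "(R \<in> D \<or> S \<in> D) \<and> (Uh \<in> D \<or> Vh \<in> D) \<and> (Wh \<in> D \<or> Vh \<in> D \<or> S \<in> D)"
    using core
  proof (elim disjE)
    assume "D \<inter> Cu = {S, Uh}" then show ?thesis using m[of S] m[of Uh] by simp
  next
    assume "D \<inter> Cu = {S, Vh}" then show ?thesis using m[of S] m[of Vh] by simp
  next
    assume "D \<inter> Cu = {R, Vh}" then show ?thesis using m[of R] m[of Vh] by simp
  qed
  then show "D \<in> {D. dominating (H_verts k) (H_edges k) D \<and> card D = 2 * k + 2}"
    using A by (simp add: domH)
qed

lemma img_disj: "c \<noteq> c' \<Longrightarrow> c \<subseteq> Cu \<Longrightarrow> c' \<subseteq> Cu \<Longrightarrow> \<forall>i\<in>I. \<forall>P\<in>Q i. P \<subseteq> B i \<and> card P = 2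
  \<Longrightarrow> \<forall>i\<in>I. \<forall>P\<in>Q' i. P \<subseteq> B i \<and> card P = 2 \<Longrightarrow> finite I
  \<Longrightarrow> img c I Q \<inter> img c' I Q' = {}"
proof (rule equals0I)
  fix D assume a: "c \<noteq> c'" "c \<subseteq> Cu" "c' \<subseteq> Cu" "\<forall>i\<in>I. \<forall>P\<in>Q i. P \<subseteq> B i \<and> card P = 2"
    "\<forall>i\<in>I. \<forall>P\<in>Q' i. P \<subseteq> B i \<and> card P = 2" "finite I" and D: "D \<in> img c I Q \<inter> img c' I Q'"
  have "D \<inter> Cu = c" using img_props(2)[OF _ a(2) a(6) a(4)] D by blast
  moreover have "D \<inter> Cu = c'" using img_props(2)[OF _ a(3) a(6) a(5)] D by blast
  ultimately show False using a(1) by simp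
qed

lemma img_card': "c \<subseteq> Cu \<Longrightarrow> \<forall>i\<in>I. \<forall>P\<in>Q i. P \<subseteq> B i \<and> card P = 2 \<Longrightarrow> finite I
  \<Longrightarrow> card (img c I Q) = (\<Prod>i\<in>I. card (Q i))"
  by (rule img_card) auto

lemma fin_img: "finite I \<Longrightarrow> \<forall>i\<in>I. finite (Q i) \<Longrightarrow> finite (img c I Q)"
  unfolding img_def by (simp add: finite_PiE)

lemma ex_img: "restrict (\<lambda>i. {V i, X i}) I \<in> PiE I O5" "restrict (\<lambda>i. {V i, X i}) I \<in> PiE I O3"
  by (auto simp: O5_def O3_def)

theorem mainTheorem4:
  fixes k :: nat
  shows "domination_number (G_verts k) (G_edges k) = 2 * k + 1
       \<and> num_min_dom_sets (G_verts k) (G_edges k) = 5 ^ k + 3 ^ k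
       \<and> domination_number (H_verts k) (H_edges k) = 2 * k + 2
       \<and> num_min_dom_sets (H_verts k) (H_edges k) = 2 * 5 ^ k + 3 ^ k"
proof -
  have SCu: "{S} \<subseteq> Cu" "{R} \<subseteq> Cu" "{S, Uh} \<subseteq> Cu" "{S, Vh} \<subseteq> Cu" "{R, Vh} \<subseteq> Cu"
    by (auto simp: Cu_def)
  have fin: "finite {1..k}" by simp
  have O5q: "\<forall>i\<in>{1..k}. \<forall>P\<in>O5 i. P \<subseteq> B i \<and> card P = 2" using O5_ok by blast
  have O3q: "\<forall>i\<in>{1..k}. \<forall>P\<in>O3 i. P \<subseteq> B i \<and> card P = 2" using O3_ok by blast
  have f5: "\<forall>i\<in>{1..k}. finite (O5 i)" by (simp add: O5_def)
  have f3: "\<forall>i\<in>{1..k}. finite (O3 i)" by (simp add: O3_def)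
  have fi5: "finite (img c {1..k} O5)" for c using fin_img[OF fin f5] .
  have fi3: "finite (img c {1..k} O3)" for c using fin_img[OF fin f3] .
  define D0 where "D0 = {S} \<union> (\<Union>i\<in>{1..k}. restrict (\<lambda>i. {V i, X i}) {1..k} i)"
  have "D0 \<in> img {S} {1..k} O5" unfolding D0_def img_def using ex_img(1) by (rule imageI)
  then have "D0 \<in> {D. dominating (G_verts k) (G_edges k) D \<and> card D = 2 * k + 1}"
    unfolding famG by (rule UnI1)
  then have D0: "dominating (G_verts k) (G_edges k) D0" "card D0 = 2 * k + 1" by simp_all
  define E0 where "E0 = {S, Uh} \<union> (\<Union>i\<in>{1..k}. restrict (\<lambda>i. {V i, X i}) {1..k} i)"
  have "E0 \<in> img {S, Uh} {1..k} O5" unfolding E0_def img_def using ex_img(1) by (rule imageI)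
  then have "E0 \<in> {D. dominating (H_verts k) (H_edges k) D \<and> card D = 2 * k + 2}"
    unfolding famH by (intro UnI1)
  then have E0: "dominating (H_verts k) (H_edges k) E0" "card E0 = 2 * k + 2" by simp_all
  have g: "domination_number (G_verts k) (G_edges k) = 2 * k + 1"
    unfolding domination_number_def
    by (rule least_eq[where P="dominating (G_verts k) (G_edges k)", OF D0]) (rule G_lower)
  have h: "domination_number (H_verts k) (H_edges k) = 2 * k + 2"
    unfolding domination_number_def
    by (rule least_eq[where P="dominating (H_verts k) (H_edges k)", OF E0]) (rule H_lower)
  have d1: "img {S} {1..k} O5 \<inter> img {R} {1..k} O3 = {}"
    by (rule img_disj[OF _ SCu(1,2) O5q O3q fin]) simp
  have d2: "img {S, Uh} {1..k} O5 \<inter> img {R, Vh} {1..k} O3 = {}"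
    by (rule img_disj[OF _ SCu(3,5) O5q O3q fin]) (simp add: doubleton_eq_iff)
  have d3: "img {S, Vh} {1..k} O5 \<inter> img {R, Vh} {1..k} O3 = {}"
    by (rule img_disj[OF _ SCu(4,5) O5q O3q fin]) (simp add: doubleton_eq_iff)
  have d4: "img {S, Uh} {1..k} O5 \<inter> img {S, Vh} {1..k} O5 = {}"
    by (rule img_disj[OF _ SCu(3,4) O5q O5q fin]) (simp add: doubleton_eq_iff)
  have gc: "num_min_dom_sets (G_verts k) (G_edges k) = 5 ^ k + 3 ^ k"
  proof -
    have "num_min_dom_sets (G_verts k) (G_edges k) = card (img {S} {1..k} O5 \<union> img {R} {1..k} O3)"
      unfolding num_min_dom_sets_def g famG ..
    also have "\<dots> = card (img {S} {1..k} O5) + card (img {R} {1..k} O3)"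
      by (rule card_Un_disjoint[OF fi5 fi3 d1])
    also have "\<dots> = 5 ^ k + 3 ^ k"
      using img_card'[OF SCu(1) O5q fin] img_card'[OF SCu(2) O3q fin] by simp
    finally show ?thesis .
  qed
  have hc: "num_min_dom_sets (H_verts k) (H_edges k) = 2 * 5 ^ k + 3 ^ k"
  proof -
    have "num_min_dom_sets (H_verts k) (H_edges k) =
        card (img {S, Uh} {1..k} O5 \<union> img {S, Vh} {1..k} O5 \<union> img {R, Vh} {1..k} O3)"
      unfolding num_min_dom_sets_def h famH ..
    also have "\<dots> = card (img {S, Uh} {1..k} O5 \<union> img {S, Vh} {1..k} O5) + card (img {R, Vh} {1..k} O3)"
    proof (rule card_Un_disjoint)
      show "(img {S, Uh} {1..k} O5 \<union> img {S, Vh} {1..k} O5) \<inter> img {R, Vh} {1..k} O3 = {}"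
        using d2 d3 by blast
    qed (use fi5 fi3 in blast)+
    also have "card (img {S, Uh} {1..k} O5 \<union> img {S, Vh} {1..k} O5)
        = card (img {S, Uh} {1..k} O5) + card (img {S, Vh} {1..k} O5)"
      by (rule card_Un_disjoint[OF fi5 fi5 d4])
    also have "card (img {S, Uh} {1..k} O5) + card (img {S, Vh} {1..k} O5) + card (img {R, Vh} {1..k} O3)
       = 2 * 5 ^ k + 3 ^ k"
      using img_card'[OF SCu(3) O5q fin] img_card'[OF SCu(4) O5q fin] img_card'[OF SCu(5) O3q fin]
      by simp
    finally show ?thesis .
  qed
  show ?thesis using g gc h hc by blast
qed

end
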